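(* If $n>k\ge 3$, then $\mathrm{isat}(n,\mathcal{A}_{k+1})\ge 3n-1$.
   Context: $\mathcal{B}_n$ denotes the Boolean lattice $(2^{[n]},\subseteq)$. A family $\mathcal{F}\subseteq 2^{[n]}$ (ordered by inclusion) is induced-$\mathcal{P}$-saturated if it contains no induced copy of $\mathcal{P}$ (an injection $f$ with $u\le v\iff f(u)\subseteq f(v)$) but every family $\mathcal{F}'$ with $\mathcal{F}\subsetneq\mathcal{F}'\subseteq 2^{[n]}$ contains one. $\mathrm{isat}(n,\mathcal{P})$ is the minimum size of such a family. $\mathcal{A}_{m}$ is the $m$-element antichain. *)

theory Defs
  imports Main
begin

text \<open>The Boolean lattice B_n is the power set of the ground set [n], here {..<n}.
  The m-element antichain A_m is modelled as the poset on {..<m} in which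
  u \<le> v holds iff u = v.\<close>

definition boolean_lattice :: "nat \<Rightarrow> nat set set" where
  "boolean_lattice n = Pow {..<n}"

definition contains_induced_antichain :: "nat \<Rightarrow> nat set set \<Rightarrow> bool" where
  "contains_induced_antichain m F \<longleftrightarrow>
     (\<exists>f. f ` {..<m} \<subseteq> F \<and> inj_on f {..<m} \<and>
          (\<forall>u\<in>{..<m}. \<forall>v\<in>{..<m}. u = v \<longleftrightarrow> f u \<subseteq> f v))"

definition induced_antichain_saturated :: "nat \<Rightarrow> nat \<Rightarrow> nat set set \<Rightarrow> bool" where
  "induced_antichain_saturated n m F \<longleftrightarrow>
     F \<subseteq> boolean_lattice n \<and> \<not> contains_induced_antichain m F \<and>
     (\<forall>F'. F \<subset> F' \<and> F' \<subseteq> boolean_lattice n \<longrightarrow> contains_induced_antichain m F')"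

definition isat_antichain :: "nat \<Rightarrow> nat \<Rightarrow> nat" where
  "isat_antichain n m = Min (card ` {F. induced_antichain_saturated n m F})"

end

theory Submission
  imports Defs
begin


definition anti :: "'a set set \<Rightarrow> bool" where
  "anti A \<longleftrightarrow> (\<forall>x\<in>A. \<forall>y\<in>A. x \<subseteq> y \<longrightarrow> x = y)"

lemma anti_subset: "anti A \<Longrightarrow> B \<subseteq> A \<Longrightarrow> anti B"
  unfolding anti_def by blast

lemma chain_Union_mem:
  assumes "finite M" "M \<noteq> {}" "\<forall>x\<in>M. \<forall>y\<in>M. x \<subseteq> y \<or> y \<subseteq> x"
  shows "\<Union>M \<in> M"
  using assms
proof (induction M rule: finite_ne_induct)
  case (singleton x) then show ?case by simp
next
  case (insert x F)
  then have u: "\<Union>F \<in> F" by blast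
  then have "x \<subseteq> \<Union>F \<or> \<Union>F \<subseteq> x" using insert.prems by blast
  then show ?case using u by (auto simp: sup.absorb1 sup.absorb2)
qed

lemma chain_Inter_mem:
  assumes "finite M" "M \<noteq> {}" "\<forall>x\<in>M. \<forall>y\<in>M. x \<subseteq> y \<or> y \<subseteq> x"
  shows "\<Inter>M \<in> M"
  using assms
proof (induction M rule: finite_ne_induct)
  case (singleton x) then show ?case by simp
next
  case (insert x F)
  then have u: "\<Inter>F \<in> F" by blast
  then have "x \<subseteq> \<Inter>F \<or> \<Inter>F \<subseteq> x" using insert.prems by blast
  then show ?case using u by (auto simp: inf.absorb1 inf.absorb2)
qed

lemma anti_colors:
  assumes "anti A" "card A = k" "A \<subseteq> F" "finite F"
    and "\<forall>x\<in>F. c x < k" and "\<forall>x\<in>F. \<forall>y\<in>F. c x = c y \<longrightarrow> x \<subseteq> y \<or> y \<subseteq> x"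
    and "t < k"
  shows "\<exists>y\<in>A. c y = t"
proof -
  have fA: "finite A" using assms(3,4) finite_subset by blast
  have inj: "inj_on c A"
  proof (rule inj_onI)
    fix x y assume xy: "x \<in> A" "y \<in> A" "c x = c y"
    then have "x \<subseteq> y \<or> y \<subseteq> x" using assms(3,6) by blast
    then show "x = y" using assms(1) xy(1,2) unfolding anti_def by blast
  qed
  have sub: "c ` A \<subseteq> {..<k}" using assms(3,5) by auto
  have "card (c ` A) = k" using inj assms(2) card_image by blast
  then have "c ` A = {..<k}" using sub card_subset_eq[OF finite_lessThan sub] by simp
  then show ?thesis using assms(7) by (metis imageE lessThan_iff)
qed



lemma dilworth:
  fixes F :: "'a set set"
  assumes "finite F" "\<forall>A\<subseteq>F. anti A \<longrightarrow> card A \<le> k"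
  shows "\<exists>c. (\<forall>x\<in>F. c x < k) \<and> (\<forall>x\<in>F. \<forall>y\<in>F. c x = c y \<longrightarrow> x \<subseteq> y \<or> y \<subseteq> x)"
  using assms
proof (induction "card F" arbitrary: F k rule: less_induct)
  case less
  show ?case
  proof (cases "F = {}")
    case True then show ?thesis by auto
  next
    case False
    then obtain x0 where x0: "x0 \<in> F" by blast
    have "anti {x0}" unfolding anti_def by simp
    moreover have "{x0} \<subseteq> F" using x0 by simp
    ultimately have "card {x0} \<le> k" using less.prems(2) by blast
    then have k0: "k > 0" by simp
    obtain a where a: "a \<in> F" "\<forall>y\<in>F. a \<subseteq> y \<longrightarrow> a = y"
      using finite_has_maximal[OF less.prems(1) False] by blast
    define F' where "F' = F - {a}"
    have fF': "finite F'" using less.prems(1) F'_def by simp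
    have cF': "card F' < card F" unfolding F'_def using card_Diff1_less[OF less.prems(1) a(1)] by simp
    have W': "\<forall>A\<subseteq>F'. anti A \<longrightarrow> card A \<le> k"
    proof (intro allI impI)
      fix A assume "A \<subseteq> F'" "anti A"
      then show "card A \<le> k" using less.prems(2) F'_def by auto
    qed
    obtain c' where c'1: "\<forall>x\<in>F'. c' x < k"
      and c'2: "\<forall>x\<in>F'. \<forall>y\<in>F'. c' x = c' y \<longrightarrow> x \<subseteq> y \<or> y \<subseteq> x"
      using less.hyps[OF cF' fF' W'] by blast
    show ?thesis
    proof (cases "\<exists>A\<subseteq>F'. anti A \<and> card A = k")
      case False
      have W'': "\<forall>A\<subseteq>F'. anti A \<longrightarrow> card A \<le> k - 1"
      proof (intro allI impI)
        fix A assume A: "A \<subseteq> F'" "anti A"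
        then have "card A \<le> k" using W' by blast
        moreover have "card A \<noteq> k" using A False by blast
        ultimately show "card A \<le> k - 1" by linarith
      qed
      obtain d where d1: "\<forall>x\<in>F'. d x < k - 1"
        and d2: "\<forall>x\<in>F'. \<forall>y\<in>F'. d x = d y \<longrightarrow> x \<subseteq> y \<or> y \<subseteq> x"
        using less.hyps[OF cF' fF' W''] by blast
      define c where "c = d(a := k - 1)"
      have ca: "c a = k - 1" unfolding c_def by simp
      have cx: "x \<in> F' \<Longrightarrow> c x = d x" for x unfolding c_def F'_def by auto
      have "\<forall>x\<in>F. c x < k"
      proof
        fix x assume "x \<in> F"
        show "c x < k"
        proof (cases "x = a")
          case True then show ?thesis using ca k0 by simp
        next
          case False then have "x \<in> F'" using \<open>x \<in> F\<close> F'_def by blast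
          then show ?thesis using cx d1 by fastforce
        qed
      qed
      moreover have "\<forall>x\<in>F. \<forall>y\<in>F. c x = c y \<longrightarrow> x \<subseteq> y \<or> y \<subseteq> x"
      proof (intro ballI impI)
        fix x y assume xy: "x \<in> F" "y \<in> F" "c x = c y"
        show "x \<subseteq> y \<or> y \<subseteq> x"
        proof (cases "x = y")
          case True then show ?thesis by simp
        next
          case ne: False
          show ?thesis
          proof (cases "x = a")
            case True
            then have "y \<in> F'" using ne xy(2) F'_def by blast
            then have "c y < k - 1" using cx d1 by fastforce
            then show ?thesis using xy(3) True ca by simp
          next
            case xa: False
            then have xF: "x \<in> F'" using xy(1) F'_def by blast
            show ?thesis
            proof (cases "y = a")
              case True
              have "c x < k - 1" using xF cx d1 by fastforce
              then show ?thesis using xy(3) True ca by simp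
            next
              case False
              then have yF: "y \<in> F'" using xy(2) F'_def by blast
              then have "d x = d y" using xF cx xy(3) by simp
              then show ?thesis using d2 xF yF by blast
            qed
          qed
        qed
      qed
      ultimately show ?thesis by blast
    next
      case True
      define G where "G = {x\<in>F'. \<exists>A\<subseteq>F'. anti A \<and> card A = k \<and> x \<in> A}"
      define xm where "xm t = \<Union>{x\<in>G. c' x = t}" for t
      have cover: "\<And>B t. B \<subseteq> F' \<Longrightarrow> anti B \<Longrightarrow> card B = k \<Longrightarrow> t < k \<Longrightarrow> \<exists>y\<in>B. c' y = t"
        using anti_colors[OF _ _ _ fF' c'1 c'2] by blast
      obtain A0 where A0: "A0 \<subseteq> F'" "anti A0" "card A0 = k" using True by blast
      have xm_mem: "xm t \<in> G \<and> c' (xm t) = t" if t: "t < k" for t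
      proof -
        let ?M = "{x\<in>G. c' x = t}"
        obtain y where y: "y \<in> A0" "c' y = t" using cover[OF A0 t] by blast
        have "y \<in> G" unfolding G_def using y A0 by blast
        then have ne: "?M \<noteq> {}" using y by blast
        have fM: "finite ?M" using fF' unfolding G_def by simp
        have ch: "\<forall>x\<in>?M. \<forall>y\<in>?M. x \<subseteq> y \<or> y \<subseteq> x" using c'2 unfolding G_def by auto
        have "\<Union>?M \<in> ?M" using chain_Union_mem[OF fM ne ch] .
        then show ?thesis unfolding xm_def by simp
      qed
      have xm_max: "y \<subseteq> xm t" if "y \<in> G" "c' y = t" for y t
        using that unfolding xm_def by blast
      have GF: "G \<subseteq> F'" unfolding G_def by blast
      have nosub: "s = t" if st: "s < k" "t < k" "xm s \<subseteq> xm t" for s t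
      proof (rule ccontr)
        assume ne: "s \<noteq> t"
        have "xm t \<in> G" using xm_mem[OF st(2)] by blast
        then obtain B where B: "B \<subseteq> F'" "anti B" "card B = k" "xm t \<in> B" unfolding G_def by blast
        obtain y where y: "y \<in> B" "c' y = s" using cover[OF B(1,2,3) st(1)] by blast
        have "y \<in> G" unfolding G_def using B y by blast
        then have "y \<subseteq> xm s" using xm_max y by blast
        then have "y \<subseteq> xm t" using st(3) by blast
        then have "y = xm t" using B(2,4) y(1) unfolding anti_def by blast
        then show False using y(2) xm_mem[OF st(2)] ne by simp
      qed
      have "\<exists>t0<k. xm t0 \<subseteq> a"
      proof (rule ccontr)
        assume H: "\<not> (\<exists>t0<k. xm t0 \<subseteq> a)"
        define X where "X = insert a (xm ` {..<k})"
        have xmF: "xm t \<in> F'" if "t < k" for t using xm_mem[OF that] GF by blast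
        have xmF2: "xm t \<in> F \<and> xm t \<noteq> a" if "t < k" for t
          using xmF[OF that] unfolding F'_def by simp
        have XF: "X \<subseteq> F" unfolding X_def using a(1) xmF2 by auto
        have ninA: "a \<notin> xm ` {..<k}" using xmF2 by auto
        have injx: "inj_on xm {..<k}"
        proof (rule inj_onI)
          fix s t assume st: "s \<in> {..<k}" "t \<in> {..<k}" "xm s = xm t"
          have "c' (xm s) = s" using xm_mem st(1) by simp
          moreover have "c' (xm t) = t" using xm_mem st(2) by simp
          ultimately show "s = t" using st(3) by metis
        qed
        have ck: "card (xm ` {..<k}) = k" using card_image[OF injx] card_lessThan[of k] by (rule trans)
        have "card X = Suc (card (xm ` {..<k}))" unfolding X_def
          using card_insert_disjoint[OF finite_imageI[OF finite_lessThan] ninA] .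
        then have "card X = k + 1" using ck by simp
        moreover have "anti X"
          unfolding anti_def X_def
        proof (intro ballI impI)
          fix x y assume x: "x \<in> insert a (xm ` {..<k})" and y: "y \<in> insert a (xm ` {..<k})"
            and xy: "x \<subseteq> y"
          show "x = y"
          proof (cases "x = a")
            case True
            then show ?thesis using a(2) xy y XF X_def by blast
          next
            case xa: False
            then obtain s where s: "s < k" "x = xm s" using x by auto
            show ?thesis
            proof (cases "y = a")
              case True then show ?thesis using H s xy by blast
            next
              case False
              then obtain t where t: "t < k" "y = xm t" using y by auto
              then show ?thesis using nosub[OF s(1) t(1)] s xy by simp
            qed
          qed
        qed
        moreover have "card X \<le> k" using less.prems(2) XF \<open>anti X\<close> by blast
        ultimately show False by simp
      qed
      then obtain t0 where t0: "t0 < k" "xm t0 \<subseteq> a" by blast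
      define K where "K = insert a {z\<in>F'. c' z = t0 \<and> z \<subseteq> xm t0}"
      define F'' where "F'' = F - K"
      have fF'': "finite F''" using less.prems(1) F''_def by simp
      have "F'' \<subset> F" unfolding F''_def K_def using a(1) by blast
      then have cF'': "card F'' < card F" using less.prems(1) psubset_card_mono by blast
      have W'': "\<forall>A\<subseteq>F''. anti A \<longrightarrow> card A \<le> k - 1"
      proof (intro allI impI)
        fix B assume B: "B \<subseteq> F''" "anti B"
        have BF': "B \<subseteq> F'" using B(1) unfolding F''_def F'_def K_def by blast
        have "card B \<noteq> k"
        proof
          assume ck: "card B = k"
          obtain y where y: "y \<in> B" "c' y = t0" using cover[OF BF' B(2) ck t0(1)] by blast
          have "y \<in> G" unfolding G_def using BF' B(2) ck y by blast
          then have "y \<subseteq> xm t0" using xm_max y by blast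
          then have "y \<in> K" unfolding K_def using BF' y by blast
          then show False using B(1) y(1) unfolding F''_def by blast
        qed
        moreover have "card B \<le> k" using W' BF' B(2) by blast
        ultimately show "card B \<le> k - 1" by simp
      qed
      obtain d where d1: "\<forall>x\<in>F''. d x < k - 1"
        and d2: "\<forall>x\<in>F''. \<forall>y\<in>F''. d x = d y \<longrightarrow> x \<subseteq> y \<or> y \<subseteq> x"
        using less.hyps[OF cF'' fF'' W''] by blast
      have Kch: "\<forall>x\<in>K. \<forall>y\<in>K. x \<subseteq> y \<or> y \<subseteq> x"
      proof (intro ballI)
        fix x y assume x: "x \<in> K" and y: "y \<in> K"
        show "x \<subseteq> y \<or> y \<subseteq> x"
        proof (cases "x = a \<or> y = a")
          case True
          then show ?thesis using x y t0(2) unfolding K_def by blast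
        next
          case False
          then show ?thesis using x y c'2 unfolding K_def by auto
        qed
      qed
      define c where "c x = (if x \<in> K then k - 1 else d x)" for x
      have "\<forall>x\<in>F. c x < k"
      proof
        fix x assume x: "x \<in> F"
        show "c x < k"
        proof (cases "x \<in> K")
          case True then show ?thesis unfolding c_def using k0 by simp
        next
          case False
          then have "x \<in> F''" using x F''_def by blast
          then have "d x < k - 1" using d1 by blast
          then show ?thesis unfolding c_def using False by simp
        qed
      qed
      moreover have "\<forall>x\<in>F. \<forall>y\<in>F. c x = c y \<longrightarrow> x \<subseteq> y \<or> y \<subseteq> x"
      proof (intro ballI impI)
        fix x y assume xy: "x \<in> F" "y \<in> F" "c x = c y"
        show "x \<subseteq> y \<or> y \<subseteq> x"
        proof (cases "x \<in> K")
          case xK: True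
          show ?thesis
          proof (cases "y \<in> K")
            case True then show ?thesis using Kch xK by blast
          next
            case False
            then have "y \<in> F''" using xy(2) F''_def by blast
            then show ?thesis using xy(3) xK False d1 unfolding c_def by fastforce
          qed
        next
          case xK: False
          show ?thesis
          proof (cases "y \<in> K")
            case True
            have "x \<in> F''" using xy(1) xK F''_def by blast
            then show ?thesis using xy(3) xK True d1 unfolding c_def by fastforce
          next
            case False
            then show ?thesis using xy xK d2 unfolding c_def F''_def by auto
          qed
        qed
      qed
      ultimately show ?thesis by blast
    qed
  qed
qed



lemma choose_ge: "0 < m \<Longrightarrow> m < d \<Longrightarrow> d \<le> d choose m"
proof (induction d arbitrary: m)
  case 0 then show ?case by simp
next
  case (Suc d)
  show ?case
  proof (cases "m = 1")
    case True then show ?thesis by simp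
  next
    case False
    then obtain m' where m': "m = Suc m'" "0 < m'" using Suc.prems(1) by (cases m) auto
    have "m' < d" using Suc.prems(2) m'(1) by simp
    then have h1: "d \<le> d choose m'" using Suc.IH m'(2) by blast
    have "Suc m' \<le> d" using Suc.prems(2) m'(1) by simp
    then have h2: "0 < d choose (Suc m')" by simp
    have "(Suc d choose m) = (d choose m') + (d choose (Suc m'))" using m'(1) by simp
    then show ?thesis using h1 h2 by linarith
  qed
qed

definition valid :: "('a set \<Rightarrow> nat) \<Rightarrow> 'a set set \<Rightarrow> nat \<Rightarrow> bool" where
  "valid c F k \<longleftrightarrow> (\<forall>x\<in>F. c x < k) \<and> (\<forall>x\<in>F. \<forall>y\<in>F. c x = c y \<longrightarrow> x \<subseteq> y \<or> y \<subseteq> x)"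

definition SatC :: "nat \<Rightarrow> nat \<Rightarrow> nat set set \<Rightarrow> bool" where
  "SatC n k F \<longleftrightarrow> (\<forall>S. S \<subseteq> {..<n} \<longrightarrow> S \<notin> F \<longrightarrow>
     (\<exists>A\<subseteq>F. anti A \<and> card A = k \<and> (\<forall>a\<in>A. \<not> a \<subseteq> S \<and> \<not> S \<subseteq> a)))"

lemma gap:
  assumes FP: "F \<subseteq> Pow {..<n}" "finite F" and v: "valid c F k" and sat: "SatC n k F"
    and t: "t < k" and nol: "\<forall>X\<in>F. c X = t \<longrightarrow> card X \<noteq> i" and i: "0 < i" "i < n"
  shows "\<exists>P Q. P \<subseteq> Q \<and> Q \<subseteq> {..<n} \<and> card P < i \<and> i < card Q \<and>
   (\<forall>S. P \<subseteq> S \<and> S \<subseteq> Q \<and> card S = i \<longrightarrow> S \<in> F) \<and>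
   (\<forall>X\<in>F. c X = t \<longrightarrow> X \<subseteq> P \<or> Q \<subseteq> X) \<and>
   (P \<noteq> {} \<longrightarrow> P \<in> F \<and> c P = t) \<and> (Q \<noteq> {..<n} \<longrightarrow> Q \<in> F \<and> c Q = t)"
proof -
  have v1: "\<forall>x\<in>F. c x < k" and v2: "\<forall>x\<in>F. \<forall>y\<in>F. c x = c y \<longrightarrow> x \<subseteq> y \<or> y \<subseteq> x"
    using v unfolding valid_def by auto
  have finX: "finite X" if "X \<in> F" for X using that FP(1) finite_subset by blast
  define Lo where "Lo = {X\<in>F. c X = t \<and> card X < i}"
  define Hi where "Hi = {X\<in>F. c X = t \<and> i < card X}"
  define P where "P = \<Union>Lo"
  define Q where "Q = {..<n} \<inter> \<Inter>Hi"
  have fLo: "finite Lo" unfolding Lo_def using FP(2) by simp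
  have fHi: "finite Hi" unfolding Hi_def using FP(2) by simp
  have chLo: "\<forall>x\<in>Lo. \<forall>y\<in>Lo. x \<subseteq> y \<or> y \<subseteq> x" unfolding Lo_def using v2 by auto
  have chHi: "\<forall>x\<in>Hi. \<forall>y\<in>Hi. x \<subseteq> y \<or> y \<subseteq> x" unfolding Hi_def using v2 by auto
  have P1: "P \<in> Lo" if "Lo \<noteq> {}" unfolding P_def using chain_Union_mem[OF fLo that chLo] .
  have P2: "P = {}" if "Lo = {}" unfolding P_def using that by simp
  have Q1: "Q \<in> Hi" if ne: "Hi \<noteq> {}"
  proof -
    have m: "\<Inter>Hi \<in> Hi" using chain_Inter_mem[OF fHi ne chHi] .
    then have "\<Inter>Hi \<subseteq> {..<n}" unfolding Hi_def using FP(1) by blast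
    then have "Q = \<Inter>Hi" unfolding Q_def by blast
    then show ?thesis using m by simp
  qed
  have Q2: "Q = {..<n}" if "Hi = {}" unfolding Q_def using that by simp
  have cP: "card P < i"
  proof (cases "Lo = {}")
    case True then show ?thesis using P2 i by simp
  next
    case False then show ?thesis using P1 unfolding Lo_def by blast
  qed
  have cQ: "i < card Q"
  proof (cases "Hi = {}")
    case True then show ?thesis using Q2 i by simp
  next
    case False then show ?thesis using Q1 unfolding Hi_def by blast
  qed
  have QS: "Q \<subseteq> {..<n}" unfolding Q_def by blast
  have PQ: "P \<subseteq> Q"
  proof (cases "Lo = {}")
    case True then show ?thesis using P2 by simp
  next
    case lne: False
    have PL: "P \<in> Lo" using P1[OF lne] .
    show ?thesis
    proof (cases "Hi = {}")
      case True
      have "P \<subseteq> {..<n}" using PL FP(1) unfolding Lo_def by blast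
      then show ?thesis using Q2[OF True] by simp
    next
      case False
      have QH: "Q \<in> Hi" using Q1[OF False] .
      have "P \<subseteq> Q \<or> Q \<subseteq> P" using v2 PL QH unfolding Lo_def Hi_def by auto
      moreover have "\<not> Q \<subseteq> P"
      proof
        assume "Q \<subseteq> P"
        moreover have "finite P" using PL finX unfolding Lo_def by blast
        ultimately have "card Q \<le> card P" by (rule card_mono[rotated])
        then show False using cP cQ by simp
      qed
      ultimately show ?thesis by blast
    qed
  qed
  have cov: "\<forall>X\<in>F. c X = t \<longrightarrow> X \<subseteq> P \<or> Q \<subseteq> X"
  proof (intro ballI impI)
    fix X assume X: "X \<in> F" "c X = t"
    have "card X \<noteq> i" using nol X by blast
    then consider "card X < i" | "i < card X" by linarith
    then show "X \<subseteq> P \<or> Q \<subseteq> X"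
    proof cases
      case 1 then have "X \<in> Lo" unfolding Lo_def using X by blast
      then show ?thesis unfolding P_def by blast
    next
      case 2 then have "X \<in> Hi" unfolding Hi_def using X by blast
      then show ?thesis unfolding Q_def by blast
    qed
  qed
  have Pm: "P \<noteq> {} \<longrightarrow> P \<in> F \<and> c P = t"
  proof
    assume "P \<noteq> {}"
    then have "Lo \<noteq> {}" using P2 by blast
    then show "P \<in> F \<and> c P = t" using P1 unfolding Lo_def by blast
  qed
  have Qm: "Q \<noteq> {..<n} \<longrightarrow> Q \<in> F \<and> c Q = t"
  proof
    assume "Q \<noteq> {..<n}"
    then have "Hi \<noteq> {}" using Q2 by blast
    then show "Q \<in> F \<and> c Q = t" using Q1 unfolding Hi_def by blast
  qed
  have between: "\<forall>S. P \<subseteq> S \<and> S \<subseteq> Q \<and> card S = i \<longrightarrow> S \<in> F"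
  proof (intro allI impI)
    fix S assume S: "P \<subseteq> S \<and> S \<subseteq> Q \<and> card S = i"
    show "S \<in> F"
    proof (rule ccontr)
      assume nS: "S \<notin> F"
      have "S \<subseteq> {..<n}" using S QS by blast
      then obtain A where A: "A \<subseteq> F" "anti A" "card A = k" "\<forall>a\<in>A. \<not> a \<subseteq> S \<and> \<not> S \<subseteq> a"
        using sat nS unfolding SatC_def by blast
      obtain y where y: "y \<in> A" "c y = t" using anti_colors[OF A(2,3,1) FP(2) v1 v2 t] by blast
      have "y \<subseteq> P \<or> Q \<subseteq> y" using cov y A(1) by blast
      then have "y \<subseteq> S \<or> S \<subseteq> y" using S by blast
      then show False using A(4) y(1) by blast
    qed
  qed
  show ?thesis
    apply (rule exI[of _ P], rule exI[of _ Q])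
    using PQ QS cP cQ between cov Pm Qm by blast
qed

lemma count:
  assumes PQ: "P \<subseteq> Q" and fQ: "finite Q" and cP: "card P < i" and cQ: "i < card Q"
    and bw: "\<forall>S. P \<subseteq> S \<and> S \<subseteq> Q \<and> card S = i \<longrightarrow> S \<in> L" and fL: "finite L" and cL: "card L \<le> 2"
  shows "\<exists>x y. x \<noteq> y \<and> x \<notin> P \<and> y \<notin> P \<and> Q = insert x (insert y P) \<and> i = Suc (card P)"
proof -
  define D where "D = Q - P"
  have fP: "finite P" using PQ fQ finite_subset by blast
  have fD: "finite D" unfolding D_def using fQ by simp
  have cD: "card D = card Q - card P" unfolding D_def using card_Diff_subset[OF fP PQ] .
  define m where "m = i - card P"
  have m0: "0 < m" "m < card D" using cP cQ cD unfolding m_def by linarith+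
  define BB where "BB = {B. B \<subseteq> D \<and> card B = m}"
  have cBB: "card BB = card D choose m" unfolding BB_def using n_subsets[OF fD] .
  have inj: "inj_on (\<lambda>B. P \<union> B) BB"
  proof (rule inj_onI)
    fix B B' assume B: "B \<in> BB" "B' \<in> BB" "P \<union> B = P \<union> B'"
    have "B = (P \<union> B) - P" using B(1) unfolding BB_def D_def by blast
    also have "\<dots> = (P \<union> B') - P" using B(3) by simp
    also have "\<dots> = B'" using B(2) unfolding BB_def D_def by blast
    finally show "B = B'" .
  qed
  have sub: "(\<lambda>B. P \<union> B) ` BB \<subseteq> L"
  proof
    fix S assume "S \<in> (\<lambda>B. P \<union> B) ` BB"
    then obtain B where B: "B \<subseteq> D" "card B = m" "S = P \<union> B" unfolding BB_def by blast
    have fB: "finite B" using B(1) fD finite_subset by blast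
    have dis: "P \<inter> B = {}" using B(1) unfolding D_def by blast
    have "card S = card P + m" using card_Un_disjoint[OF fP fB dis] B(2,3) by simp
    then have "card S = i" unfolding m_def using cP by simp
    moreover have "P \<subseteq> S" "S \<subseteq> Q" using B(1,3) PQ unfolding D_def by blast+
    ultimately show "S \<in> L" using bw by blast
  qed
  have "card ((\<lambda>B. P \<union> B) ` BB) = card D choose m" using card_image[OF inj] cBB by simp
  moreover have "card ((\<lambda>B. P \<union> B) ` BB) \<le> card L" using card_mono[OF fL sub] .
  moreover have "card D \<le> card D choose m" using choose_ge[OF m0] .
  ultimately have "card D \<le> 2" using cL by linarith
  then have d2: "card D = 2" and m1: "m = 1" using m0 by linarith+
  from d2 obtain x y where xy: "D = {x, y}" "x \<noteq> y" unfolding card_2_iff by blast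
  have QPD: "Q = P \<union> D" unfolding D_def using PQ by blast
  have Qe: "Q = insert x (insert y P)" unfolding QPD xy(1) by auto
  have xP: "x \<notin> P" "y \<notin> P" using xy(1) unfolding D_def by auto
  have iP: "i = Suc (card P)" using m1 cP unfolding m_def by linarith
  show ?thesis
    apply (rule exI[of _ x], rule exI[of _ y])
    using xy(2) xP Qe iP by simp
qed



lemma level3:
  assumes FP: "F \<subseteq> Pow {..<n}" "finite F" and W: "\<forall>A\<subseteq>F. anti A \<longrightarrow> card A \<le> k"
    and sat: "SatC n k F" and k3: "3 \<le> k" and i: "0 < i" "i < n" and n3: "3 \<le> n"
  shows "3 \<le> card {X\<in>F. card X = i}"
proof (rule ccontr)
  define Li where "Li = {X\<in>F. card X = i}"
  assume "\<not> 3 \<le> card {X\<in>F. card X = i}"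
  then have cL: "card Li \<le> 2" unfolding Li_def by simp
  have fL: "finite Li" unfolding Li_def using FP(2) by simp
  have finX: "finite X" if "X \<in> F" for X using that FP(1) finite_subset by blast
  obtain c where "(\<forall>x\<in>F. c x < k) \<and> (\<forall>x\<in>F. \<forall>y\<in>F. c x = c y \<longrightarrow> x \<subseteq> y \<or> y \<subseteq> x)"
    using dilworth[OF FP(2) W] by blast
  then have v: "valid c F k" unfolding valid_def by blast
  have v1: "\<forall>x\<in>F. c x < k" and v2: "\<forall>x\<in>F. \<forall>y\<in>F. c x = c y \<longrightarrow> x \<subseteq> y \<or> y \<subseteq> x"
    using v unfolding valid_def by auto
  have "card (c ` Li) \<le> 2" using card_image_le[OF fL, of c] cL by linarith
  then have "c ` Li \<noteq> {..<k}" using k3 by auto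
  moreover have "c ` Li \<subseteq> {..<k}" using v1 unfolding Li_def by auto
  ultimately obtain t where t: "t < k" "t \<notin> c ` Li" by blast
  have nol: "\<forall>X\<in>F. c X = t \<longrightarrow> card X \<noteq> i"
    using t(2) unfolding Li_def by blast
  obtain P Q where PQ: "P \<subseteq> Q" "Q \<subseteq> {..<n}" "card P < i" "i < card Q"
    and bw: "\<forall>S. P \<subseteq> S \<and> S \<subseteq> Q \<and> card S = i \<longrightarrow> S \<in> F"
    and cov: "\<forall>X\<in>F. c X = t \<longrightarrow> X \<subseteq> P \<or> Q \<subseteq> X"
    and Pm: "P \<noteq> {} \<longrightarrow> P \<in> F \<and> c P = t" and Qm: "Q \<noteq> {..<n} \<longrightarrow> Q \<in> F \<and> c Q = t"
    using gap[OF FP v sat t(1) nol i] by blast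
  have fQ: "finite Q" using PQ(2) finite_subset by blast
  have bwL: "\<forall>S. P \<subseteq> S \<and> S \<subseteq> Q \<and> card S = i \<longrightarrow> S \<in> Li" using bw unfolding Li_def by blast
  obtain x y where xy: "x \<noteq> y" "x \<notin> P" "y \<notin> P" "Q = insert x (insert y P)" "i = Suc (card P)"
    using count[OF PQ(1) fQ PQ(3,4) bwL fL cL] by blast
  have fP: "finite P" using PQ(1) fQ finite_subset by blast
  define S1 where "S1 = insert x P"
  define S2 where "S2 = insert y P"
  have S1L: "S1 \<in> Li"
  proof -
    have "card S1 = i" unfolding S1_def using xy(2,5) fP by simp
    moreover have "P \<subseteq> S1" "S1 \<subseteq> Q" unfolding S1_def using xy(4) by auto
    ultimately show ?thesis using bwL by blast
  qed
  have S2L: "S2 \<in> Li"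
  proof -
    have "card S2 = i" unfolding S2_def using xy(3,5) fP by simp
    moreover have "P \<subseteq> S2" "S2 \<subseteq> Q" unfolding S2_def using xy(4) by auto
    ultimately show ?thesis using bwL by blast
  qed
  have S12: "S1 \<noteq> S2" unfolding S1_def S2_def using xy(1,2,3) by blast
  have Li_eq: "Li = {S1, S2}"
  proof -
    have sub: "{S1, S2} \<subseteq> Li" using S1L S2L by blast
    have "card {S1, S2} = 2" using S12 by simp
    then have "card Li \<le> card {S1, S2}" using cL by simp
    then show ?thesis using card_seteq[OF fL sub] by simp
  qed
  have PI: "P = S1 \<inter> S2" unfolding S1_def S2_def using xy(1,2,3) by blast
  have QU: "Q = S1 \<union> S2" unfolding S1_def S2_def using xy(4) by blast
  have PS1: "P \<subseteq> S1" "S1 \<subseteq> Q" unfolding S1_def using xy(4) by auto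
  have S1F: "S1 \<in> F" "card S1 = i" using S1L unfolding Li_def by auto
  define t1 where "t1 = c S1"
  have t1k: "t1 < k" unfolding t1_def using v1 S1F by blast
  have tt1: "t1 \<noteq> t" unfolding t1_def using nol S1F by blast
  define c' where "c' = c(S1 := t)"
  have c'o: "c' X = c X" if "X \<noteq> S1" for X unfolding c'_def using that by simp
  have c'S: "c' S1 = t" unfolding c'_def by simp
  have v': "valid c' F k"
    unfolding valid_def
  proof (intro conjI ballI impI)
    fix X assume "X \<in> F"
    then show "c' X < k" using v1 t(1) c'o c'S by (cases "X = S1") auto
  next
    fix X Y assume XY: "X \<in> F" "Y \<in> F" "c' X = c' Y"
    show "X \<subseteq> Y \<or> Y \<subseteq> X"
    proof (cases "X = S1")
      case xs: True
      show ?thesis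
      proof (cases "Y = S1")
        case True then show ?thesis using xs by simp
      next
        case False
        then have "c Y = t" using XY(3) xs c'o c'S by simp
        then have "Y \<subseteq> P \<or> Q \<subseteq> Y" using cov XY(2) by blast
        then show ?thesis using xs PS1 by blast
      qed
    next
      case xs: False
      show ?thesis
      proof (cases "Y = S1")
        case ys: True
        then have "c X = t" using XY(3) xs c'o c'S by simp
        then have "X \<subseteq> P \<or> Q \<subseteq> X" using cov XY(1) by blast
        then show ?thesis using ys PS1 by blast
      next
        case False
        then have "c X = c Y" using XY(3) xs c'o by simp
        then show ?thesis using v2 XY(1,2) by blast
      qed
    qed
  qed
  have nol': "\<forall>X\<in>F. c' X = t1 \<longrightarrow> card X \<noteq> i"
  proof (intro ballI impI)
    fix X assume X: "X \<in> F" "c' X = t1"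
    show "card X \<noteq> i"
    proof (cases "X = S1")
      case True then show ?thesis using X(2) c'S tt1 by simp
    next
      case False
      then have "c X = c S1" using X(2) c'o unfolding t1_def by simp
      then have cmp: "X \<subseteq> S1 \<or> S1 \<subseteq> X" using v2 X(1) S1F(1) by blast
      show ?thesis
      proof
        assume cX: "card X = i"
        have fX: "finite X" and fS: "finite S1" using finX X(1) S1F(1) by auto
        have "X = S1"
        proof (cases "X \<subseteq> S1")
          case True then show ?thesis using card_seteq[OF fS True] cX S1F(2) by simp
        next
          case False then have "S1 \<subseteq> X" using cmp by blast
          then show ?thesis using card_seteq[OF fX \<open>S1 \<subseteq> X\<close>] cX S1F(2) by simp
        qed
        then show False using False by simp
      qed
    qed
  qed
  obtain P' Q' where PQ': "P' \<subseteq> Q'" "Q' \<subseteq> {..<n}" "card P' < i" "i < card Q'"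
    and bw': "\<forall>S. P' \<subseteq> S \<and> S \<subseteq> Q' \<and> card S = i \<longrightarrow> S \<in> F"
    and Pm': "P' \<noteq> {} \<longrightarrow> P' \<in> F \<and> c' P' = t1" and Qm': "Q' \<noteq> {..<n} \<longrightarrow> Q' \<in> F \<and> c' Q' = t1"
    using gap[OF FP v' sat t1k nol' i] by blast
  have fQ': "finite Q'" using PQ'(2) finite_subset by blast
  have bwL': "\<forall>S. P' \<subseteq> S \<and> S \<subseteq> Q' \<and> card S = i \<longrightarrow> S \<in> Li" using bw' unfolding Li_def by blast
  obtain x' y' where xy': "x' \<noteq> y'" "x' \<notin> P'" "y' \<notin> P'" "Q' = insert x' (insert y' P')" "i = Suc (card P')"
    using count[OF PQ'(1) fQ' PQ'(3,4) bwL' fL cL] by blast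
  have fP': "finite P'" using PQ'(1) fQ' finite_subset by blast
  define T1 where "T1 = insert x' P'"
  define T2 where "T2 = insert y' P'"
  have T1L: "T1 \<in> Li"
  proof -
    have "card T1 = i" unfolding T1_def using xy'(2,5) fP' by simp
    moreover have "P' \<subseteq> T1" "T1 \<subseteq> Q'" unfolding T1_def using xy'(4) by auto
    ultimately show ?thesis using bwL' by blast
  qed
  have T2L: "T2 \<in> Li"
  proof -
    have "card T2 = i" unfolding T2_def using xy'(3,5) fP' by simp
    moreover have "P' \<subseteq> T2" "T2 \<subseteq> Q'" unfolding T2_def using xy'(4) by auto
    ultimately show ?thesis using bwL' by blast
  qed
  have T12: "T1 \<noteq> T2" unfolding T1_def T2_def using xy'(1,2,3) by blast
  have PI': "P' = T1 \<inter> T2" unfolding T1_def T2_def using xy'(1,2,3) by blast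
  have QU': "Q' = T1 \<union> T2" unfolding T1_def T2_def using xy'(4) by blast
  have TT: "(T1 = S1 \<and> T2 = S2) \<or> (T1 = S2 \<and> T2 = S1)"
    using T1L T2L T12 unfolding Li_eq by blast
  have PP: "P' = P" using TT PI PI' by (metis inf_commute)
  have QQ: "Q' = Q" using TT QU QU' by (metis sup_commute)
  show False
  proof (cases "P = {}")
    case False
    have "P \<in> F" "c P = t" using Pm False by auto
    moreover have "c' P = t1" using Pm' False PP by auto
    moreover have "P \<noteq> S1" using PQ(3) S1F(2) by auto
    ultimately show False using c'o tt1 by simp
  next
    case True
    then have cQ2: "card Q = 2" using xy(1,4) by simp
    then have "Q \<noteq> {..<n}" using n3 by auto
    then have "Q \<in> F" "c Q = t" using Qm by auto
    moreover have "c' Q = t1" using Qm' \<open>Q \<noteq> {..<n}\<close> QQ by auto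
    moreover have "Q \<noteq> S1" using cQ2 S1F(2) True xy(5) by auto
    ultimately show False using c'o tt1 by simp
  qed
qed



lemma anti_contains:
  assumes "A \<subseteq> F" "anti A" "finite A"
  shows "contains_induced_antichain (card A) F"
proof -
  obtain h where h: "bij_betw h {0..<card A} A" using ex_bij_betw_nat_finite[OF assms(3)] by blast
  have h': "bij_betw h {..<card A} A" using h by (simp add: atLeast0LessThan)
  have im: "h ` {..<card A} = A" using h' bij_betw_imp_surj_on by blast
  have inj: "inj_on h {..<card A}" using h' bij_betw_imp_inj_on by blast
  have "\<forall>u\<in>{..<card A}. \<forall>v\<in>{..<card A}. u = v \<longleftrightarrow> h u \<subseteq> h v"
  proof (intro ballI iffI)
    fix u v assume "u \<in> {..<card A}" "v \<in> {..<card A}" "u = v"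
    then show "h u \<subseteq> h v" by simp
  next
    fix u v assume uv: "u \<in> {..<card A}" "v \<in> {..<card A}" "h u \<subseteq> h v"
    have "h u \<in> A" "h v \<in> A" using uv(1,2) im by auto
    then have "h u = h v" using assms(2) uv(3) unfolding anti_def by blast
    then show "u = v" using inj uv(1,2) unfolding inj_on_def by blast
  qed
  then show ?thesis unfolding contains_induced_antichain_def using im inj assms(1) by blast
qed

lemma sat_props:
  assumes S: "induced_antichain_saturated n (k + 1) F" and k1: "1 \<le> k"
  shows "F \<subseteq> Pow {..<n}" "finite F" "\<forall>A\<subseteq>F. anti A \<longrightarrow> card A \<le> k" "SatC n k F"
proof -
  have FB: "F \<subseteq> boolean_lattice n" and nc: "\<not> contains_induced_antichain (k + 1) F"
    and mx: "\<forall>F'. F \<subset> F' \<and> F' \<subseteq> boolean_lattice n \<longrightarrow> contains_induced_antichain (k + 1) F'"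
    using S unfolding induced_antichain_saturated_def by auto
  show FP: "F \<subseteq> Pow {..<n}" using FB unfolding boolean_lattice_def .
  show fF: "finite F" using FP finite_subset by blast
  show "\<forall>A\<subseteq>F. anti A \<longrightarrow> card A \<le> k"
  proof (intro allI impI)
    fix A assume A: "A \<subseteq> F" "anti A"
    show "card A \<le> k"
    proof (rule ccontr)
      assume "\<not> card A \<le> k"
      then have "k + 1 \<le> card A" by simp
      then obtain B where B: "B \<subseteq> A" "card B = k + 1" "finite B" by (rule obtain_subset_with_card_n)
      have "anti B" using A B(1) anti_subset by blast
      then have "contains_induced_antichain (card B) F" using anti_contains[of B F] A B by blast
      then show False using nc B(2) by simp
    qed
  qed
  show "SatC n k F"
    unfolding SatC_def
  proof (intro allI impI)
    fix S assume S: "S \<subseteq> {..<n}" "S \<notin> F"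
    have "F \<subset> insert S F" using S(2) by blast
    moreover have "insert S F \<subseteq> boolean_lattice n" using FB S(1) unfolding boolean_lattice_def by blast
    ultimately have "contains_induced_antichain (k + 1) (insert S F)" using mx by blast
    then obtain f where f: "f ` {..<k+1} \<subseteq> insert S F" "inj_on f {..<k+1}"
      "\<forall>u\<in>{..<k+1}. \<forall>v\<in>{..<k+1}. u = v \<longleftrightarrow> f u \<subseteq> f v"
      unfolding contains_induced_antichain_def by blast
    have "S \<in> f ` {..<k+1}"
    proof (rule ccontr)
      assume "S \<notin> f ` {..<k+1}"
      then have "f ` {..<k+1} \<subseteq> F" using f(1) by blast
      then have "contains_induced_antichain (k + 1) F"
        unfolding contains_induced_antichain_def using f(2,3) by blast
      then show False using nc by simp
    qed
    then obtain u0 where u0: "u0 < k + 1" "f u0 = S" by auto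
    define A where "A = f ` ({..<k+1} - {u0})"
    have AF: "A \<subseteq> F"
    proof
      fix X assume "X \<in> A"
      then obtain v where v: "v < k + 1" "v \<noteq> u0" "X = f v" unfolding A_def by auto
      have "f v \<noteq> S" using f(2) u0 v(1,2) unfolding inj_on_def by auto
      moreover have "f v \<in> insert S F" using f(1) v(1) by auto
      ultimately show "X \<in> F" using v(3) by simp
    qed
    have antiA: "anti A"
      unfolding anti_def
    proof (intro ballI impI)
      fix X Y assume XY: "X \<in> A" "Y \<in> A" "X \<subseteq> Y"
      obtain v where v: "v < k + 1" "X = f v" using XY(1) unfolding A_def by auto
      obtain w where w: "w < k + 1" "Y = f w" using XY(2) unfolding A_def by auto
      have "f v \<subseteq> f w" using XY(3) v(2) w(2) by simp
      then have "v = w" using f(3)[rule_format, of v w] v(1) w(1) by simp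
      then show "X = Y" using v(2) w(2) by simp
    qed
    have "card A = card ({..<k+1} - {u0})" unfolding A_def
      by (rule card_image[OF inj_on_subset[OF f(2)]]) blast
    also have "\<dots> = k" using u0(1) by simp
    finally have cA: "card A = k" .
    have inc: "\<forall>a\<in>A. \<not> a \<subseteq> S \<and> \<not> S \<subseteq> a"
    proof
      fix a assume "a \<in> A"
      then obtain v where v: "v < k + 1" "v \<noteq> u0" "a = f v" unfolding A_def by auto
      have vin: "v \<in> {..<k+1}" "u0 \<in> {..<k+1}" using v(1) u0(1) by auto
      have "\<not> f v \<subseteq> f u0" using f(3)[rule_format, OF vin(1) vin(2)] v(2) by simp
      moreover have "\<not> f u0 \<subseteq> f v" using f(3)[rule_format, OF vin(2) vin(1)] v(2) by auto
      ultimately show "\<not> a \<subseteq> S \<and> \<not> S \<subseteq> a" using v(3) u0(2) by simp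
    qed
    show "\<exists>A\<subseteq>F. anti A \<and> card A = k \<and> (\<forall>a\<in>A. \<not> a \<subseteq> S \<and> \<not> S \<subseteq> a)"
      using AF antiA cA inc by blast
  qed
qed

lemma sat_card:
  assumes S: "induced_antichain_saturated n (k + 1) F" and k3: "3 \<le> k" and nk: "k < n"
  shows "3 * n - 1 \<le> card F"
proof -
  have k1: "1 \<le> k" using k3 by simp
  note P = sat_props[OF S k1]
  have n3: "3 \<le> n" using k3 nk by simp
  define L where "L i = {X\<in>F. card X = i}" for i
  have fL: "finite (L i)" for i unfolding L_def using P(2) by simp
  have FU: "F = (\<Union>i\<in>{..n}. L i)"
  proof
    show "F \<subseteq> (\<Union>i\<in>{..n}. L i)"
    proof
      fix X assume X: "X \<in> F"
      then have "X \<subseteq> {..<n}" using P(1) by blast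
      then have "card X \<le> n" using card_mono[OF finite_lessThan] by fastforce
      then show "X \<in> (\<Union>i\<in>{..n}. L i)" unfolding L_def using X by blast
    qed
  next
    show "(\<Union>i\<in>{..n}. L i) \<subseteq> F" unfolding L_def by blast
  qed
  have "card F = (\<Sum>i\<in>{..n}. card (L i))"
    unfolding FU
    by (rule card_UN_disjoint) (auto simp: P(2) L_def)
  moreover have "{..n} = insert 0 (insert n {1..<n})" using n3 by auto
  moreover have "0 \<notin> insert n {1..<n}" "n \<notin> {1..<n}" using n3 by auto
  ultimately have cF: "card F = card (L 0) + (card (L n) + (\<Sum>i\<in>{1..<n}. card (L i)))"
    by simp
  have H3: "\<forall>i\<in>{1..<n}. 3 \<le> card (L i)"
  proof
    fix i assume "i \<in> {1..<n}"
    then have "0 < i" "i < n" by auto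
    then show "3 \<le> card (L i)" unfolding L_def using level3[OF P(1,2,3,4) k3 _ _ n3] by blast
  qed
  have "(\<Sum>i\<in>{1..<n}. 3) \<le> (\<Sum>i\<in>{1..<n}. card (L i))"
    apply (rule sum_mono) using H3 by blast
  then have s3: "3 * (n - 1) \<le> (\<Sum>i\<in>{1..<n}. card (L i))" by simp
  obtain A where A: "A \<subseteq> F" "anti A" "card A = k" "\<forall>a\<in>A. \<not> a \<subseteq> {} \<and> \<not> {} \<subseteq> a"
    if "{} \<notin> F" using P(4) unfolding SatC_def by blast
  have e: "{} \<in> F"
  proof (rule ccontr)
    assume ne: "{} \<notin> F"
    then have "A \<noteq> {}" using A(3) k3 by auto
    then show False using A(4)[OF ne] by blast
  qed
  obtain B where B: "B \<subseteq> F" "anti B" "card B = k" "\<forall>a\<in>B. \<not> a \<subseteq> {..<n} \<and> \<not> {..<n} \<subseteq> a"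
    if "{..<n} \<notin> F" using P(4) unfolding SatC_def by blast
  have u: "{..<n} \<in> F"
  proof (rule ccontr)
    assume ne: "{..<n} \<notin> F"
    then have "B \<noteq> {}" using B(3) k3 by auto
    then obtain b where "b \<in> B" by blast
    then have "b \<subseteq> {..<n}" using B(1)[OF ne] P(1) by blast
    then show False using B(4)[OF ne] \<open>b \<in> B\<close> by blast
  qed
  have "{} \<in> L 0" unfolding L_def using e by simp
  then have c0: "1 \<le> card (L 0)" using fL card_0_eq by fastforce
  have "{..<n} \<in> L n" unfolding L_def using u by simp
  then have cn: "1 \<le> card (L n)" using fL card_0_eq by fastforce
  show ?thesis using cF s3 c0 cn n3 by linarith
qed



theorem proposition3p2:
  fixes n k :: nat
  assumes "n > k" and "k \<ge> 3"
  shows "isat_antichain n (k + 1) \<ge> 3 * n - 1"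
proof -
  define Sats where "Sats = {F. induced_antichain_saturated n (k + 1) F}"
  define Free where "Free = {F. F \<subseteq> boolean_lattice n \<and> \<not> contains_induced_antichain (k + 1) F}"
  have fB: "finite (boolean_lattice n)" unfolding boolean_lattice_def by simp
  have finS: "finite Sats"
  proof (rule finite_subset[of _ "Pow (boolean_lattice n)"])
    show "Sats \<subseteq> Pow (boolean_lattice n)" unfolding Sats_def induced_antichain_saturated_def by blast
    show "finite (Pow (boolean_lattice n))" using fB by simp
  qed
  have finF: "finite Free"
  proof (rule finite_subset[of _ "Pow (boolean_lattice n)"])
    show "Free \<subseteq> Pow (boolean_lattice n)" unfolding Free_def by blast
    show "finite (Pow (boolean_lattice n))" using fB by simp
  qed
  have "\<not> contains_induced_antichain (k + 1) {}"
    unfolding contains_induced_antichain_def by auto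
  then have eF: "{} \<in> Free" unfolding Free_def by simp
  define m where "m = Max (card ` Free)"
  have "m \<in> card ` Free" unfolding m_def using finF eF by (intro Max_in) auto
  then obtain F0 where F0: "F0 \<in> Free" "card F0 = m" by blast
  have mx: "card G \<le> m" if "G \<in> Free" for G unfolding m_def using finF that by (intro Max_ge) auto
  have "induced_antichain_saturated n (k + 1) F0"
    unfolding induced_antichain_saturated_def
  proof (intro conjI allI impI)
    show "F0 \<subseteq> boolean_lattice n" using F0(1) unfolding Free_def by blast
    show "\<not> contains_induced_antichain (k + 1) F0" using F0(1) unfolding Free_def by blast
  next
    fix F' assume F': "F0 \<subset> F' \<and> F' \<subseteq> boolean_lattice n"
    show "contains_induced_antichain (k + 1) F'"
    proof (rule ccontr)
      assume nc: "\<not> contains_induced_antichain (k + 1) F'"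
      then have "F' \<in> Free" unfolding Free_def using F' by blast
      then have "card F' \<le> m" using mx by blast
      moreover have "finite F'" using F' fB finite_subset by blast
      then have "card F0 < card F'" using F' psubset_card_mono by blast
      ultimately show False using F0(2) by simp
    qed
  qed
  then have ne: "Sats \<noteq> {}" unfolding Sats_def by blast
  have "isat_antichain n (k + 1) \<in> card ` Sats"
    unfolding isat_antichain_def Sats_def[symmetric]
    using finS ne by (intro Min_in) auto
  then obtain F where F: "F \<in> Sats" "isat_antichain n (k + 1) = card F" by auto
  have "3 * n - 1 \<le> card F"
    using sat_card[of n k F] F(1) assms unfolding Sats_def by simp
  then show ?thesis using F(2) by simp
qed


end
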